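(* Let $\mathbb D\subset\mathbb C$ be a contractible open subset containing $0$. Let $\nu=\nu(z,w)$ and $s=s(z,w)$ be holomorphic functions on $\mathbb D\times\mathbb D$ satisfying $\nu_{zz}+\tfrac s2\nu=0$, with $\nu(0,0)=0$ and $\nu\not\equiv0$. Then the limit of $\mu=-\frac{2\nu_z}{\nu}$ as $(z,w)\to(0,0)$ exists, i.e. it is either a finite number or $\infty$. *)

theory Defs
  imports "HOL-Analysis.Analysis"
begin

definition holomorphic2_on :: "(complex \<times> complex \<Rightarrow> complex) \<Rightarrow> (complex \<times> complex) set \<Rightarrow> bool" where
  "holomorphic2_on f S \<longleftrightarrow>
     (\<forall>p\<in>S. \<exists>a b. (f has_derivative (\<lambda>(h, k). a * h + b * k)) (at p))"

definition dz :: "(complex \<times> complex \<Rightarrow> complex) \<Rightarrow> complex \<times> complex \<Rightarrow> complex" where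
  "dz f p = deriv (\<lambda>z. f (z, snd p)) (fst p)"

end

theory Submission
  imports Defs "HOL-Complex_Analysis.Complex_Analysis"
begin


lemma h2_D:
  assumes "holomorphic2_on f S" "p \<in> S"
  shows "\<exists>a b. (f has_derivative (\<lambda>(h, k). a * h + b * k)) (at p)"
  using assms unfolding holomorphic2_on_def by blast

lemma h2_isCont:
  assumes "holomorphic2_on f S" "p \<in> S"
  shows "isCont f p"
proof -
  from h2_D[OF assms] obtain a b where "(f has_derivative (\<lambda>(h, k). a * h + b * k)) (at p)"
    by blast
  then show ?thesis by (rule has_derivative_continuous)
qed

lemma h2_cont:
  assumes "holomorphic2_on f S"
  shows "continuous_on S f"
  using h2_isCont[OF assms] by (simp add: continuous_at_imp_continuous_on)

lemma h2_z:
  assumes "holomorphic2_on f S" "(z,w) \<in> S"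
  shows "(\<lambda>z. f (z,w)) field_differentiable (at z)"
proof -
  from h2_D[OF assms] obtain a b where d: "(f has_derivative (\<lambda>(h, k). a * h + b * k)) (at (z,w))"
    by blast
  have p: "((\<lambda>z. (z,w)) has_derivative (\<lambda>h. (h,0))) (at z)"
    by (auto intro!: derivative_eq_intros)
  have "((\<lambda>z. f (z,w)) has_derivative (\<lambda>h. a * h)) (at z)"
    using diff_chain_at[OF p d] by (simp add: o_def)
  then have "((\<lambda>z. f (z,w)) has_field_derivative a) (at z)"
    by (simp add: has_field_derivative_def)
  then show ?thesis unfolding field_differentiable_def by (rule exI)
qed

lemma h2_w:
  assumes "holomorphic2_on f S" "(z,w) \<in> S"
  shows "(\<lambda>w. f (z,w)) field_differentiable (at w)"
proof -
  from h2_D[OF assms] obtain a b where d: "(f has_derivative (\<lambda>(h, k). a * h + b * k)) (at (z,w))"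
    by blast
  have p: "((\<lambda>w. (z,w)) has_derivative (\<lambda>h. (0,h))) (at w)"
    by (auto intro!: derivative_eq_intros)
  have "((\<lambda>w. f (z,w)) has_derivative (\<lambda>h. b * h)) (at w)"
    using diff_chain_at[OF p d] by (simp add: o_def)
  then have "((\<lambda>w. f (z,w)) has_field_derivative b) (at w)"
    by (simp add: has_field_derivative_def)
  then show ?thesis unfolding field_differentiable_def by (rule exI)
qed

lemma h2_zhol:
  assumes "holomorphic2_on f (D \<times> D)" "w \<in> D"
  shows "(\<lambda>z. f (z,w)) holomorphic_on D"
  unfolding holomorphic_on_def
  using h2_z[OF assms(1)] assms(2) field_differentiable_at_within by blast

lemma h2_whol:
  assumes "holomorphic2_on f (D \<times> D)" "z \<in> D"
  shows "(\<lambda>w. f (z,w)) holomorphic_on D"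
  unfolding holomorphic_on_def
  using h2_w[OF assms(1)] assms(2) field_differentiable_at_within by blast



lemma taylor_aux:
  fixes f :: "complex \<Rightarrow> complex"
  assumes hol: "f holomorphic_on U" "open U" "cball 0 \<rho> \<subseteq> U"
    and bd: "\<And>x. x \<in> cball 0 \<rho> \<Longrightarrow> norm (deriv (deriv f) x) \<le> B"
    and z: "z \<in> cball 0 \<rho>"
  shows "norm (f z - (f 0 + deriv f 0 * z)) \<le> B * norm z ^ 2"
    and "norm (deriv f z - deriv f 0) \<le> B * norm z"
proof -
  have d: "((deriv ^^ i) f has_field_derivative (deriv ^^ (Suc i)) f x) (at x within cball 0 \<rho>)"
    if "x \<in> cball 0 \<rho>" for i x
  proof -
    have "(deriv ^^ i) f holomorphic_on U" using hol by (intro holomorphic_higher_deriv) auto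
    then show ?thesis using holomorphic_derivI[of "(deriv ^^ i) f" U x] hol that by auto
  qed
  have 0: "0 \<in> cball (0::complex) \<rho>" using z by (simp add: dist_norm) (meson norm_ge_zero order_trans)
  have "norm ((deriv ^^ 0) f z - (\<Sum>i\<le>Suc 0. (deriv ^^ i) f 0 * (z-0) ^ i / (fact i))) \<le> B * norm (z - 0)^(Suc (Suc 0)) / fact (Suc 0)"
    by (rule complex_Taylor[of "cball 0 \<rho>" "Suc 0" "\<lambda>i. (deriv ^^ i) f" B 0 z])
      (use d bd z 0 in \<open>auto simp: numeral_2_eq_2\<close>)
  then show "norm (f z - (f 0 + deriv f 0 * z)) \<le> B * norm z ^ 2"
    by (simp add: numeral_2_eq_2 add.commute)
  have "norm ((deriv ^^ Suc 0) f z - (\<Sum>i\<le>0. (deriv ^^ Suc i) f 0 * (z-0) ^ i / (fact i))) \<le> B * norm (z - 0)^(Suc 0) / fact 0"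
    by (rule complex_Taylor[of "cball 0 \<rho>" "0" "\<lambda>i. (deriv ^^ Suc i) f" B 0 z])
      (use d[of _ "Suc 0"] bd z 0 in \<open>auto\<close>)
  then show "norm (deriv f z - deriv f 0) \<le> B * norm z"
    by simp
qed

lemma ode_est:
  fixes f :: "complex \<Rightarrow> complex"
  assumes hol: "f holomorphic_on U" "open U" "cball 0 \<rho> \<subseteq> U"
    and ode: "\<And>x. x \<in> cball 0 \<rho> \<Longrightarrow> norm (deriv (deriv f) x) \<le> M * norm (f x)"
    and M: "0 \<le> M" "\<rho> \<le> 1" "M * \<rho>^2 \<le> 1/2"
    and z: "z \<in> cball 0 \<rho>"
  shows "norm (f z - (f 0 + deriv f 0 * z)) \<le> (2*M*(norm (f 0) + norm (deriv f 0))) * norm z ^ 2"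
    and "norm (deriv f z - deriv f 0) \<le> (2*M*(norm (f 0) + norm (deriv f 0))) * norm z"
proof -
  define N where "N = norm (f 0) + norm (deriv f 0)"
  have cf: "continuous_on (cball 0 \<rho>) (\<lambda>x. norm (f x))"
    using hol by (intro continuous_intros holomorphic_on_imp_continuous_on) (auto intro: holomorphic_on_subset)
  obtain zs where zs: "zs \<in> cball 0 \<rho>" and zmax: "\<And>y. y \<in> cball 0 \<rho> \<Longrightarrow> norm (f y) \<le> norm (f zs)"
    using continuous_attains_sup[OF compact_cball _ cf] z by blast
  define S where "S = norm (f zs)"
  have b1: "norm (deriv (deriv f) x) \<le> M * S" if "x \<in> cball 0 \<rho>" for x
  proof -
    have "M * norm (f x) \<le> M * S" using mult_left_mono[OF zmax[OF that] M(1)] unfolding S_def .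
    then show ?thesis using ode[OF that] by linarith
  qed
  have t: "norm (f zs - (f 0 + deriv f 0 * zs)) \<le> M * S * norm zs ^ 2"
    by (rule taylor_aux(1)[OF hol b1 zs])
  have nz: "norm zs \<le> \<rho>" using zs by simp
  have "M * S * norm zs ^ 2 \<le> M * S * \<rho>^2"
    using nz M S_def by (intro mult_left_mono power_mono) auto
  also have "\<dots> \<le> S / 2"
  proof -
    have S0: "0 \<le> S" by (simp add: S_def)
    have "S * (M*\<rho>^2) \<le> S*(1/2)" using mult_left_mono[OF M(3) S0] .
    then show ?thesis by (simp add: algebra_simps)
  qed
  finally have t2: "norm (f zs - (f 0 + deriv f 0 * zs)) \<le> S/2" using t by linarith
  have "norm (f 0 + deriv f 0 * zs) \<le> norm (f 0) + norm (deriv f 0) * norm zs"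
    by (metis norm_mult norm_triangle_ineq)
  also have "\<dots> \<le> N" unfolding N_def using nz M by (auto intro!: mult_left_le)
  finally have "norm (f 0 + deriv f 0 * zs) \<le> N" .
  then have "S \<le> N + S/2" using t2 norm_triangle_sub[of "f zs" "f 0 + deriv f 0 * zs"] unfolding S_def by linarith
  then have SN: "S \<le> 2 * N" by linarith
  have b2: "norm (deriv (deriv f) x) \<le> 2*M*N" if "x \<in> cball 0 \<rho>" for x
  proof -
    have "M * S \<le> M * (2 * N)" using mult_left_mono[OF SN M(1)] .
    then show ?thesis using b1[OF that] by (simp add: algebra_simps)
  qed
  show "norm (f z - (f 0 + deriv f 0 * z)) \<le> (2*M*(norm (f 0) + norm (deriv f 0))) * norm z ^ 2"
    using taylor_aux(1)[OF hol b2 z] unfolding N_def .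
  show "norm (deriv f z - deriv f 0) \<le> (2*M*(norm (f 0) + norm (deriv f 0))) * norm z"
    using taylor_aux(2)[OF hol b2 z] unfolding N_def .
qed



lemma ratio_lim:
  fixes A B :: "complex \<Rightarrow> complex"
  assumes hA: "A holomorphic_on U" and hB: "B holomorphic_on U" and U: "open U" "0 \<in> U"
  shows "(\<forall>\<^sub>F w in at 0. A w = 0 \<and> B w = 0) \<or>
         ((\<forall>\<^sub>F w in at 0. B w \<noteq> 0) \<and> ((\<lambda>w. A w / B w) \<longlongrightarrow> 0) (at 0)) \<or>
         ((\<forall>\<^sub>F w in at 0. A w \<noteq> 0) \<and> (\<exists>L. ((\<lambda>w. B w / A w) \<longlongrightarrow> L) (at 0)))"
proof -
  have isoA: "isolated_singularity_at A 0"
    by (rule isolated_singularity_at_holomorphic[OF holomorphic_on_subset[OF hA] U(1) U(2)]) auto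
  have isoB: "isolated_singularity_at B 0"
    by (rule isolated_singularity_at_holomorphic[OF holomorphic_on_subset[OF hB] U(1) U(2)]) auto
  have neA: "not_essential A 0" by (rule not_essential_holomorphic[OF hA U(2) U(1)])
  have neB: "not_essential B 0" by (rule not_essential_holomorphic[OF hB U(2) U(1)])
  show ?thesis
  proof (cases "\<forall>\<^sub>F w in at 0. B w = 0")
    case Bz: True
    show ?thesis
    proof (cases "\<forall>\<^sub>F w in at 0. A w = 0")
      case True
      then show ?thesis using Bz by (simp add: eventually_conj)
    next
      case False
      then have "\<exists>\<^sub>F w in at 0. A w \<noteq> 0" by (simp add: not_eventually)
      then have evA: "\<forall>\<^sub>F w in at 0. A w \<noteq> 0" by (rule non_zero_neighbour[OF isoA neA])
      have "((\<lambda>w. B w / A w) \<longlongrightarrow> 0) (at 0)"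
        by (rule tendsto_eventually) (use Bz in \<open>auto elim: eventually_mono\<close>)
      then show ?thesis using evA by blast
    qed
  next
    case False
    then have "\<exists>\<^sub>F w in at 0. B w \<noteq> 0" by (simp add: not_eventually)
    then have evB: "\<forall>\<^sub>F w in at 0. B w \<noteq> 0" by (rule non_zero_neighbour[OF isoB neB])
    have "not_essential (\<lambda>w. A w / B w) 0"
      by (rule not_essential_divide[OF neA neB isoA isoB])
    then obtain x where "((\<lambda>w. A w / B w) \<longlongrightarrow> x) (at 0) \<or> is_pole (\<lambda>w. A w / B w) 0"
      unfolding not_essential_def by blast
    then show ?thesis
    proof
      assume lim: "((\<lambda>w. A w / B w) \<longlongrightarrow> x) (at 0)"
      show ?thesis
      proof (cases "x = 0")
        case True
        then show ?thesis using lim evB by blast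
      next
        case False
        have "\<forall>\<^sub>F w in at 0. A w / B w \<noteq> 0"
          using tendsto_imp_eventually_ne[OF lim False] .
        then have evA: "\<forall>\<^sub>F w in at 0. A w \<noteq> 0" by (auto elim: eventually_mono)
        have "((\<lambda>w. inverse (A w / B w)) \<longlongrightarrow> inverse x) (at 0)"
          by (rule tendsto_inverse[OF lim False])
        then have "((\<lambda>w. B w / A w) \<longlongrightarrow> inverse x) (at 0)"
          by (simp add: inverse_divide)
        then show ?thesis using evA by blast
      qed
    next
      assume pole: "is_pole (\<lambda>w. A w / B w) 0"
      then have lim: "filterlim (\<lambda>w. A w / B w) at_infinity (at 0)" unfolding is_pole_def .
      have "\<forall>\<^sub>F w in at 0. A w / B w \<noteq> 0"
        using filterlim_at_infinity_imp_eventually_ne[OF lim] .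
      then have evA: "\<forall>\<^sub>F w in at 0. A w \<noteq> 0" by (auto elim: eventually_mono)
      have "((\<lambda>w. inverse (A w / B w)) \<longlongrightarrow> 0) (at 0)"
        using filterlim_inverse_at_iff[THEN iffD2, OF lim] by (simp add: filterlim_at)
      then have "((\<lambda>w. B w / A w) \<longlongrightarrow> 0) (at 0)"
        by (simp add: inverse_divide)
      then show ?thesis using evA by blast
    qed
  qed
qed



lemma deriv_param_hol:
  fixes g :: "complex \<Rightarrow> complex \<Rightarrow> complex"
  assumes hz: "\<And>w. w \<in> cball 0 \<rho> \<Longrightarrow> (\<lambda>z. g z w) holomorphic_on U"
    and U: "open U" "cball 0 \<rho> \<subseteq> U" and \<rho>: "0 < \<rho>"
    and hw: "\<And>z. z \<in> cball 0 \<rho> \<Longrightarrow> continuous_on (cball 0 \<rho>) (g z) \<and> (g z) holomorphic_on ball 0 \<rho>"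
    and bd: "\<And>z w. z \<in> cball 0 \<rho> \<Longrightarrow> w \<in> cball 0 \<rho> \<Longrightarrow> norm (deriv (deriv (\<lambda>z. g z w)) z) \<le> C"
  shows "(\<lambda>w. deriv (\<lambda>z. g z w) 0) holomorphic_on ball 0 \<rho>"
    and "continuous_on (cball 0 \<rho>) (\<lambda>w. deriv (\<lambda>z. g z w) 0)"
proof -
  define h where "h n = complex_of_real (\<rho> / real (Suc n))" for n
  have nh: "norm (h n) = \<rho> / real (Suc n)" for n unfolding h_def norm_of_real using \<rho> by simp
  have hin: "h n \<in> cball 0 \<rho>" for n
    using \<rho> by (simp add: nh field_simps)
  have hne: "h n \<noteq> 0" for n using \<rho> nh[of n] by auto
  have 0: "0 \<in> cball (0::complex) \<rho>" using \<rho> by simp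
  have C0: "0 \<le> C" using bd[OF 0 0] norm_ge_zero order_trans by blast
  define fn where "fn n w = (g (h n) w - g 0 w) / h n" for n w
  define G where "G w = deriv (\<lambda>z. g z w) 0" for w
  have cont: "\<forall>\<^sub>F n in sequentially. continuous_on (cball 0 \<rho>) (fn n) \<and> (fn n) holomorphic_on ball 0 \<rho>"
  proof (intro always_eventually allI conjI)
    fix n
    show "continuous_on (cball 0 \<rho>) (fn n)" unfolding fn_def
      using hw[OF hin] hw[OF 0] hne by (intro continuous_intros) auto
    show "(fn n) holomorphic_on ball 0 \<rho>" unfolding fn_def
      using hw[OF hin] hw[OF 0] hne by (intro holomorphic_intros) auto
  qed
  have lim0: "(\<lambda>n. C * \<rho> * inverse (real (Suc n))) \<longlonglongrightarrow> 0"
    by (intro tendsto_mult_right_zero LIMSEQ_inverse_real_of_nat)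
  have ulim: "uniform_limit (cball 0 \<rho>) fn G sequentially"
  proof (rule uniform_limitI)
    fix e :: real assume e: "0 < e"
    have "\<forall>\<^sub>F n in sequentially. C * \<rho> * inverse (real (Suc n)) < e"
      using order_tendstoD(2)[OF lim0 e] .
    then show "\<forall>\<^sub>F n in sequentially. \<forall>w\<in>cball 0 \<rho>. dist (fn n w) (G w) < e"
    proof (rule eventually_mono, intro ballI)
      fix n :: nat and w :: complex assume lt: "C * \<rho> * inverse (real (Suc n)) < e" and w: "w \<in> cball 0 \<rho>"
      have t: "norm (g (h n) w - (g 0 w + G w * h n)) \<le> C * norm (h n) ^ 2"
        unfolding G_def by (rule taylor_aux(1)[OF hz[OF w] U(1) U(2) bd[OF _ w] hin])
      have "fn n w - G w = (g (h n) w - (g 0 w + G w * h n)) / h n"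
        using hne by (simp add: fn_def field_simps)
      then have "dist (fn n w) (G w) = norm (g (h n) w - (g 0 w + G w * h n)) / norm (h n)"
        by (simp add: dist_norm norm_divide)
      also have "\<dots> \<le> C * norm (h n) ^ 2 / norm (h n)"
        using t hne by (intro divide_right_mono) auto
      also have "\<dots> = C * norm (h n)" using hne by (simp add: power2_eq_square)
      also have "\<dots> = C * \<rho> * inverse (real (Suc n))" by (simp add: nh divide_inverse)
      finally show "dist (fn n w) (G w) < e" using lt by linarith
    qed
  qed
  obtain "continuous_on (cball 0 \<rho>) G" "G holomorphic_on ball 0 \<rho>"
    using holomorphic_uniform_limit[OF cont ulim trivial_limit_sequentially] by blast
  then show "(\<lambda>w. deriv (\<lambda>z. g z w) 0) holomorphic_on ball 0 \<rho>"
    and "continuous_on (cball 0 \<rho>) (\<lambda>w. deriv (\<lambda>z. g z w) 0)" unfolding G_def by auto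
qed



lemma rel_bound:
  fixes E X Y :: complex
  assumes "norm E \<le> c * (norm X + norm Y) * t" "Y \<noteq> 0" "norm (X/Y) \<le> k" "0 \<le> c" "0 \<le> t"
  shows "norm (E/Y) \<le> t * (c*(k+1))"
proof -
  have Y: "norm Y > 0" using assms(2) by simp
  have "norm (E/Y) = norm E / norm Y" by (simp add: norm_divide)
  also have "\<dots> \<le> c * (norm X + norm Y) * t / norm Y"
    using assms(1) Y by (intro divide_right_mono) auto
  also have "\<dots> = c * (norm (X/Y) + 1) * t"
    using Y by (simp add: norm_divide field_simps)
  also have "\<dots> \<le> c * (k + 1) * t"
    using assms by (intro mult_right_mono mult_left_mono) auto
  finally show ?thesis by (simp add: algebra_simps)
qed

lemma rel_bound':
  fixes E X Y :: complex
  assumes "norm E \<le> c * (norm Y + norm X) * t" "Y \<noteq> 0" "norm (X/Y) \<le> k" "0 \<le> c" "0 \<le> t"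
  shows "norm (E/Y) \<le> t * (c*(k+1))"
  using rel_bound[of E c X Y t k] assms by (simp add: add.commute)

lemma filterlim_divide_at_infinity':
  fixes f g :: "'b \<Rightarrow> 'a :: real_normed_field"
  assumes "filterlim f (nhds c) F" "filterlim g (at 0) F" "c \<noteq> 0"
  shows   "filterlim (\<lambda>x. f x / g x) at_infinity F"
proof -
  have "filterlim (\<lambda>x. f x * inverse (g x)) at_infinity F"
    by (intro tendsto_mult_filterlim_at_infinity[OF assms(1,3)]
          filterlim_compose [OF filterlim_inverse_at_infinity assms(2)])
  thus ?thesis by (simp add: field_simps)
qed

lemma ratio_eq:
  fixes b x y :: complex
  assumes "b \<noteq> 0"
  shows "-2 * (x / b) / (y / b) = -2 * x / y"
  using assms by (cases "y = 0") (auto simp: field_simps)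

lemma bound_cont:
  fixes f :: "'a::topological_space \<Rightarrow> 'b::real_normed_vector"
  assumes "compact K" "continuous_on K f"
  obtains b where "b > 0" "\<And>x. x \<in> K \<Longrightarrow> norm (f x) \<le> b"
proof -
  have "bounded (f ` K)" using compact_continuous_image[OF assms(2,1)] compact_imp_bounded by blast
  then obtain b where "b > 0" "\<forall>y\<in>f ` K. norm y \<le> b" using bounded_pos by metis
  then show ?thesis using that by blast
qed



theorem lemma2p12:
  fixes D :: "complex set"
    and \<nu> s :: "complex \<times> complex \<Rightarrow> complex"
  assumes "open D" and "contractible D" and "0 \<in> D"
    and "holomorphic2_on \<nu> (D \<times> D)"
    and "holomorphic2_on s (D \<times> D)"
    and "\<forall>p\<in>D \<times> D. dz (dz \<nu>) p + s p / 2 * \<nu> p = 0"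
    and "\<nu> (0, 0) = 0"
    and "\<exists>p\<in>D \<times> D. \<nu> p \<noteq> 0"
  shows "(\<exists>L. ((\<lambda>p. - 2 * dz \<nu> p / \<nu> p) \<longlongrightarrow> L)
              (at (0, 0) within {p \<in> D \<times> D. \<nu> p \<noteq> 0}))
       \<or> filterlim (\<lambda>p. - 2 * dz \<nu> p / \<nu> p) at_infinity
              (at (0, 0) within {p \<in> D \<times> D. \<nu> p \<noteq> 0})"
proof -
  note hv = assms(4) and hs = assms(5) and ode = assms(6)
  obtain r0 where r0: "r0 > 0" "cball 0 r0 \<subseteq> D"
    using open_contains_cball assms(1,3) by blast
  define K where "K = cball (0::complex) r0 \<times> cball (0::complex) r0"
  have K: "compact K" "K \<subseteq> D \<times> D" using r0 by (auto simp: K_def intro: compact_Times)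
  obtain M where M: "M > 0" "\<And>p. p \<in> K \<Longrightarrow> norm (s p) \<le> M"
    using bound_cont[OF K(1) continuous_on_subset[OF h2_cont[OF hs] K(2)]] by blast
  obtain C0 where C0: "C0 > 0" "\<And>p. p \<in> K \<Longrightarrow> norm (\<nu> p) \<le> C0"
    using bound_cont[OF K(1) continuous_on_subset[OF h2_cont[OF hv] K(2)]] by blast
  define \<rho> where "\<rho> = min r0 (min 1 (1/(2*M)))"
  have \<rho>: "0 < \<rho>" "\<rho> \<le> r0" "\<rho> \<le> 1" "\<rho> \<le> 1/(2*M)"
    using r0 M by (auto simp: \<rho>_def)
  have M\<rho>: "M * \<rho>^2 \<le> 1/2"
  proof -
    have "M * \<rho> \<le> M * (1/(2*M))" using \<rho>(4) M(1) by (intro mult_left_mono) auto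
    then have a: "M * \<rho> \<le> 1/2" using M(1) by simp
    have "M * \<rho>^2 = (M*\<rho>) * \<rho>" by (simp add: power2_eq_square)
    also have "\<dots> \<le> (1/2) * 1" using a \<rho> M(1) by (intro mult_mono) auto
    finally show ?thesis by simp
  qed
  have cb: "cball 0 \<rho> \<subseteq> D" using \<rho>(2) r0(2) by auto
  have cbK: "z \<in> cball 0 \<rho> \<Longrightarrow> w \<in> cball 0 \<rho> \<Longrightarrow> (z,w) \<in> K" for z w
    using \<rho>(2) by (auto simp: K_def)
  define A where "A w = \<nu> (0, w)" for w
  define B where "B w = deriv (\<lambda>z. \<nu> (z, w)) 0" for w
  define N where "N w = norm (A w) + norm (B w)" for w
  have dzB: "dz \<nu> (0, w) = B w" for w by (simp add: dz_def B_def)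
  have hz: "(\<lambda>z. \<nu> (z, w)) holomorphic_on D" if "w \<in> cball 0 \<rho>" for w
    using h2_zhol[OF hv] cb that by auto
  have odeb: "norm (deriv (deriv (\<lambda>z. \<nu> (z, w))) x) \<le> M * norm (\<nu> (x, w))"
    if w: "w \<in> cball 0 \<rho>" and x: "x \<in> cball 0 \<rho>" for w x
  proof -
    have xw: "(x, w) \<in> D \<times> D" using cb w x by auto
    have "dz (dz \<nu>) (x, w) = deriv (deriv (\<lambda>z. \<nu> (z, w))) x"
      by (simp add: dz_def)
    then have e: "deriv (deriv (\<lambda>z. \<nu> (z, w))) x = - (s (x, w) / 2 * \<nu> (x, w))"
      using ode xw by (metis add_eq_0_iff2)
    have "norm (s (x, w) / 2) \<le> M" using M(2)[OF cbK[OF x w]] M(1) by (simp add: norm_divide)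
    then have "norm (s (x, w) / 2) * norm (\<nu> (x, w)) \<le> M * norm (\<nu> (x, w))"
      by (intro mult_right_mono) auto
    then show ?thesis unfolding e by (simp add: norm_mult)
  qed
  have E1: "norm (\<nu> (z, w) - (A w + B w * z)) \<le> (2*M*N w) * norm z ^ 2"
    if w: "w \<in> cball 0 \<rho>" and z: "z \<in> cball 0 \<rho>" for z w
    using ode_est(1)[OF hz[OF w] assms(1) cb odeb[OF w] _ \<rho>(3) M\<rho> z] M(1)
    unfolding A_def B_def N_def by simp
  have E2: "norm (dz \<nu> (z, w) - B w) \<le> (2*M*N w) * norm z"
    if w: "w \<in> cball 0 \<rho>" and z: "z \<in> cball 0 \<rho>" for z w
    using ode_est(2)[OF hz[OF w] assms(1) cb odeb[OF w] _ \<rho>(3) M\<rho> z] M(1)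
    unfolding A_def B_def N_def by (simp add: dz_def)
  have hw: "(\<lambda>w. \<nu> (z, w)) holomorphic_on D" if "z \<in> cball 0 \<rho>" for z
    using h2_whol[OF hv] cb that by auto
  have Bprops: "(\<lambda>w. deriv (\<lambda>z. \<nu> (z, w)) 0) holomorphic_on ball 0 \<rho> \<and>
                continuous_on (cball 0 \<rho>) (\<lambda>w. deriv (\<lambda>z. \<nu> (z, w)) 0)"
  proof (rule conjI)
    have bd: "norm (deriv (deriv (\<lambda>z. \<nu> (z, w))) z) \<le> M * C0"
      if "z \<in> cball 0 \<rho>" "w \<in> cball 0 \<rho>" for z w
      using odeb[OF that(2,1)] C0(2)[OF cbK[OF that]] M(1)
      by (meson mult_left_mono order_trans less_imp_le)
    have hw': "continuous_on (cball 0 \<rho>) (\<lambda>w. \<nu> (z, w)) \<and> (\<lambda>w. \<nu> (z, w)) holomorphic_on ball 0 \<rho>"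
      if "z \<in> cball 0 \<rho>" for z
      using hw[OF that] cb by (meson holomorphic_on_imp_continuous_on holomorphic_on_subset
          continuous_on_subset ball_subset_cball order_trans)
    show "(\<lambda>w. deriv (\<lambda>z. \<nu> (z, w)) 0) holomorphic_on ball 0 \<rho>"
      by (rule deriv_param_hol(1)[of \<rho> "\<lambda>z w. \<nu> (z, w)" D "M*C0"]) (use hz assms(1) cb \<rho>(1) hw' bd in auto)
    show "continuous_on (cball 0 \<rho>) (\<lambda>w. deriv (\<lambda>z. \<nu> (z, w)) 0)"
      by (rule deriv_param_hol(2)[of \<rho> "\<lambda>z w. \<nu> (z, w)" D "M*C0"]) (use hz assms(1) cb \<rho>(1) hw' bd in auto)
  qed
  have Bhol: "B holomorphic_on ball 0 \<rho>" and Bcont: "continuous_on (cball 0 \<rho>) B"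
    using Bprops unfolding B_def by auto
  have Ahol: "A holomorphic_on ball 0 \<rho>" unfolding A_def
    using holomorphic_on_subset[OF hw[of 0]] cb \<rho>(1) ball_subset_cball
    by (metis centre_in_cball less_imp_le order_trans)
  have Acont: "continuous_on (cball 0 \<rho>) A" unfolding A_def
    using holomorphic_on_imp_continuous_on[OF hw[of 0]] cb \<rho>(1) continuous_on_subset by auto
  obtain Nb where Nb: "Nb > 0" "\<And>w. w \<in> cball 0 \<rho> \<Longrightarrow> N w \<le> Nb"
  proof -
    have "continuous_on (cball 0 \<rho>) N" unfolding N_def
      using Acont Bcont by (intro continuous_intros)
    then obtain b where "b > 0" "\<And>w. w \<in> cball 0 \<rho> \<Longrightarrow> norm (N w) \<le> b"
      using bound_cont[OF compact_cball] by metis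
    then show ?thesis using that by (metis real_norm_def abs_le_D1)
  qed
  have A0: "A 0 = 0" using assms(7) by (simp add: A_def)

  define SS where "SS = {p \<in> D \<times> D. \<nu> p \<noteq> 0}"
  define F where "F = at (0::complex, 0::complex) within SS"
  have evS: "\<forall>\<^sub>F p in F. p \<in> SS" unfolding F_def by (simp add: eventually_at_filter)
  have limid: "((\<lambda>p. p) \<longlongrightarrow> (0, 0)) F" unfolding F_def by (rule tendsto_ident_at)
  have evB: "\<forall>\<^sub>F p in F. p \<in> ball 0 \<rho> \<times> ball 0 \<rho>"
    by (rule topological_tendstoD[OF limid]) (use \<rho>(1) in \<open>auto intro: open_Times\<close>)
  have ev: "\<forall>\<^sub>F p in F. fst p \<in> cball 0 \<rho> \<and> snd p \<in> cball 0 \<rho> \<and> \<nu> p \<noteq> 0"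
    using eventually_conj[OF evS evB] by (rule eventually_mono) (auto simp: SS_def)
  have fst0: "(fst \<longlongrightarrow> 0) F" using tendsto_fst[OF limid] by simp
  have snd0: "(snd \<longlongrightarrow> 0) F" using tendsto_snd[OF limid] by simp
  define E1f where "E1f p = \<nu> p - (A (snd p) + B (snd p) * fst p)" for p
  define E2f where "E2f p = dz \<nu> p - B (snd p)" for p
  have evE: "\<forall>\<^sub>F p in F. norm (E1f p) \<le> 2*M*(norm (A (snd p)) + norm (B (snd p))) * norm (fst p)^2
     \<and> norm (E2f p) \<le> 2*M*(norm (A (snd p)) + norm (B (snd p))) * norm (fst p)"
    using ev
  proof (rule eventually_mono)
    fix p :: "complex \<times> complex"
    assume h: "fst p \<in> cball 0 \<rho> \<and> snd p \<in> cball 0 \<rho> \<and> \<nu> p \<noteq> 0"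
    obtain z w where p: "p = (z, w)" by fastforce
    show "norm (E1f p) \<le> 2*M*(norm (A (snd p)) + norm (B (snd p))) * norm (fst p)^2
     \<and> norm (E2f p) \<le> 2*M*(norm (A (snd p)) + norm (B (snd p))) * norm (fst p)"
      using E1[of w z] E2[of w z] h unfolding p E1f_def E2f_def N_def by simp
  qed
  have numid: "dz \<nu> p = B (snd p) + E2f p" for p by (simp add: E2f_def)
  have denid: "\<nu> p = A (snd p) + B (snd p) * fst p + E1f p" for p by (simp add: E1f_def)
  have nonneg: "0 \<le> 2*M" using M(1) by simp
  show ?thesis
  proof (cases "B 0 = 0")
    case False
    have Bc: "isCont B 0"
      using holomorphic_on_imp_continuous_on[OF Bhol] \<rho>(1)
      by (simp add: continuous_on_eq_continuous_at)
    have lB: "((\<lambda>p. B (snd p)) \<longlongrightarrow> B 0) F" by (rule isCont_tendsto_compose[OF Bc snd0])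
    have lE2: "(E2f \<longlongrightarrow> 0) F"
    proof (rule tendsto_0_le[OF fst0, of E2f "2*M*Nb"])
      show "\<forall>\<^sub>F p in F. norm (E2f p) \<le> norm (fst p) * (2*M*Nb)"
        using eventually_conj[OF ev evE]
      proof (rule eventually_mono)
        fix p assume h: "(fst p \<in> cball 0 \<rho> \<and> snd p \<in> cball 0 \<rho> \<and> \<nu> p \<noteq> 0) \<and>
          norm (E1f p) \<le> 2*M*(norm (A (snd p)) + norm (B (snd p))) * norm (fst p)^2
          \<and> norm (E2f p) \<le> 2*M*(norm (A (snd p)) + norm (B (snd p))) * norm (fst p)"
        have "2*M*(norm (A (snd p)) + norm (B (snd p))) \<le> 2*M*Nb"
          using Nb(2)[of "snd p"] h nonneg unfolding N_def by (intro mult_left_mono) auto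
        then have "2*M*(norm (A (snd p)) + norm (B (snd p))) * norm (fst p) \<le> 2*M*Nb * norm (fst p)"
          by (intro mult_right_mono) auto
        moreover have "norm (E2f p) \<le> 2*M*(norm (A (snd p)) + norm (B (snd p))) * norm (fst p)"
          using h by blast
        moreover have "2*M*Nb*norm (fst p) = norm (fst p)*(2*M*Nb)" by (rule mult.commute)
        ultimately show "norm (E2f p) \<le> norm (fst p) * (2*M*Nb)" by linarith
      qed
    qed
    have lnum: "((\<lambda>p. - 2 * dz \<nu> p) \<longlongrightarrow> - 2 * B 0) F"
      unfolding numid using tendsto_mult_left[OF tendsto_add[OF lB lE2], of "-2"] by simp
    have c00: "(0::complex, 0::complex) \<in> D \<times> D" using assms(3) by simp
    have lden: "((\<lambda>p. \<nu> p) \<longlongrightarrow> 0) F"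
      using isCont_tendsto_compose[OF h2_isCont[OF hv c00] limid] assms(7) by simp
    have "filterlim \<nu> (at 0) F"
      by (rule filterlim_atI[OF lden]) (use ev in \<open>auto elim: eventually_mono\<close>)
    then have "filterlim (\<lambda>p. - 2 * dz \<nu> p / \<nu> p) at_infinity F"
      by (rule filterlim_divide_at_infinity'[OF lnum]) (use False in simp)
    then show ?thesis unfolding F_def SS_def by (rule disjI2)
  next
    case B0: True
    have ev0: "\<forall>\<^sub>F p in F. snd p \<noteq> 0"
      using eventually_conj[OF ev evE]
    proof (rule eventually_mono)
      fix p assume h: "(fst p \<in> cball 0 \<rho> \<and> snd p \<in> cball 0 \<rho> \<and> \<nu> p \<noteq> 0) \<and>
          norm (E1f p) \<le> 2*M*(norm (A (snd p)) + norm (B (snd p))) * norm (fst p)^2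
          \<and> norm (E2f p) \<le> 2*M*(norm (A (snd p)) + norm (B (snd p))) * norm (fst p)"
      show "snd p \<noteq> 0"
      proof
        assume "snd p = 0"
        then have hA: "A (snd p) = 0" and hB: "B (snd p) = 0" using A0 B0 by auto
        have "norm (E1f p) \<le> 0" using h unfolding hA hB by simp
        then have "E1f p = 0" by simp
        then have "\<nu> p = 0" using denid[of p] hA hB by simp
        then show False using h by simp
      qed
    qed
    have snda: "filterlim snd (at 0) F" by (rule filterlim_atI[OF snd0 ev0])
    have comp: "\<forall>\<^sub>F p in F. P (snd p)" if "\<forall>\<^sub>F w in at 0. P w" for P
      using filterlim_iff[THEN iffD1, OF snda, rule_format, OF that] .
    have "(\<forall>\<^sub>F w in at 0. A w = 0 \<and> B w = 0) \<or>
         ((\<forall>\<^sub>F w in at 0. B w \<noteq> 0) \<and> ((\<lambda>w. A w / B w) \<longlongrightarrow> 0) (at 0)) \<or>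
         ((\<forall>\<^sub>F w in at 0. A w \<noteq> 0) \<and> (\<exists>L. ((\<lambda>w. B w / A w) \<longlongrightarrow> L) (at 0)))"
      by (rule ratio_lim[OF Ahol Bhol open_ball]) (use \<rho>(1) in simp)
    then consider
        (a) "\<forall>\<^sub>F w in at 0. A w = 0 \<and> B w = 0"
      | (b) "\<forall>\<^sub>F w in at 0. B w \<noteq> 0" "((\<lambda>w. A w / B w) \<longlongrightarrow> 0) (at 0)"
      | (c) L where "\<forall>\<^sub>F w in at 0. A w \<noteq> 0" "((\<lambda>w. B w / A w) \<longlongrightarrow> L) (at 0)"
      by blast
    then show ?thesis
    proof cases
      case a
      have "\<forall>\<^sub>F p in F. False"
        using eventually_conj[OF comp[OF a] eventually_conj[OF ev evE]]
      proof (rule eventually_mono)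
        fix p assume h: "(A (snd p) = 0 \<and> B (snd p) = 0) \<and> (fst p \<in> cball 0 \<rho> \<and> snd p \<in> cball 0 \<rho> \<and> \<nu> p \<noteq> 0) \<and>
          norm (E1f p) \<le> 2*M*(norm (A (snd p)) + norm (B (snd p))) * norm (fst p)^2
          \<and> norm (E2f p) \<le> 2*M*(norm (A (snd p)) + norm (B (snd p))) * norm (fst p)"
        then have hA: "A (snd p) = 0" and hB: "B (snd p) = 0" by auto
        have "norm (E1f p) \<le> 0" using h unfolding hA hB by simp
        then have "E1f p = 0" by simp
        then have "\<nu> p = 0" using denid[of p] hA hB by simp
        then show False using h by simp
      qed
      then have "F = bot" by (simp add: eventually_False)
      then show ?thesis unfolding F_def SS_def by simp
    next
      case b
      have evBn: "\<forall>\<^sub>F p in F. B (snd p) \<noteq> 0" by (rule comp[OF b(1)])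
      have lq: "((\<lambda>p. A (snd p) / B (snd p)) \<longlongrightarrow> 0) F"
        using filterlim_compose[OF b(2) snda] .
      have evq: "\<forall>\<^sub>F p in F. norm (A (snd p) / B (snd p)) < 1"
        using order_tendstoD(2)[OF tendsto_norm_zero[OF lq], of 1] by simp
      have evall: "\<forall>\<^sub>F p in F. B (snd p) \<noteq> 0 \<and> norm (A (snd p) / B (snd p)) < 1 \<and>
          (fst p \<in> cball 0 \<rho> \<and> snd p \<in> cball 0 \<rho> \<and> \<nu> p \<noteq> 0) \<and>
          norm (E1f p) \<le> 2*M*(norm (A (snd p)) + norm (B (snd p))) * norm (fst p)^2
          \<and> norm (E2f p) \<le> 2*M*(norm (A (snd p)) + norm (B (snd p))) * norm (fst p)"
        using eventually_conj[OF evBn eventually_conj[OF evq eventually_conj[OF ev evE]]] by simp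
      have le2_ev: "\<forall>\<^sub>F p in F. norm (E2f p / B (snd p)) \<le> norm (fst p) * (2*M*(1+1))"
        proof (rule eventually_mono[OF evall])
          fix p assume h: "B (snd p) \<noteq> 0 \<and> norm (A (snd p) / B (snd p)) < 1 \<and>
          (fst p \<in> cball 0 \<rho> \<and> snd p \<in> cball 0 \<rho> \<and> \<nu> p \<noteq> 0) \<and>
          norm (E1f p) \<le> 2*M*(norm (A (snd p)) + norm (B (snd p))) * norm (fst p)^2
          \<and> norm (E2f p) \<le> 2*M*(norm (A (snd p)) + norm (B (snd p))) * norm (fst p)"
          have a: "norm (E2f p) \<le> 2*M*(norm (A (snd p)) + norm (B (snd p))) * norm (fst p)"
            using h by (simp add: norm_power)
          show "norm (E2f p / B (snd p)) \<le> norm (fst p) * (2*M*(1+1))"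
            by (rule rel_bound[OF a]) (use h nonneg in auto)
        qed
      have le2: "((\<lambda>p. E2f p / B (snd p)) \<longlongrightarrow> 0) F"
        by (rule tendsto_0_le[OF fst0 le2_ev])
      have fst2: "((\<lambda>p. (fst p)^2) \<longlongrightarrow> 0) F" using tendsto_power[OF fst0, of 2] by simp
      have le1_ev: "\<forall>\<^sub>F p in F. norm (E1f p / B (snd p)) \<le> norm ((fst p)^2) * (2*M*(1+1))"
        proof (rule eventually_mono[OF evall])
          fix p assume h: "B (snd p) \<noteq> 0 \<and> norm (A (snd p) / B (snd p)) < 1 \<and>
          (fst p \<in> cball 0 \<rho> \<and> snd p \<in> cball 0 \<rho> \<and> \<nu> p \<noteq> 0) \<and>
          norm (E1f p) \<le> 2*M*(norm (A (snd p)) + norm (B (snd p))) * norm (fst p)^2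
          \<and> norm (E2f p) \<le> 2*M*(norm (A (snd p)) + norm (B (snd p))) * norm (fst p)"
          have a: "norm (E1f p) \<le> 2*M*(norm (A (snd p)) + norm (B (snd p))) * norm ((fst p)^2)"
            using h by (simp add: norm_power)
          show "norm (E1f p / B (snd p)) \<le> norm ((fst p)^2) * (2*M*(1+1))"
            by (rule rel_bound[OF a]) (use h nonneg in auto)
        qed
      have le1: "((\<lambda>p. E1f p / B (snd p)) \<longlongrightarrow> 0) F"
        by (rule tendsto_0_le[OF fst2 le1_ev])
      have lnum: "((\<lambda>p. -2 * (1 + E2f p / B (snd p))) \<longlongrightarrow> -2 * (1 + 0)) F"
        by (intro tendsto_intros le2)
      have lden: "((\<lambda>p. A (snd p) / B (snd p) + fst p + E1f p / B (snd p)) \<longlongrightarrow> 0 + 0 + 0) F"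
        by (intro tendsto_intros lq fst0 le1)
      have denq: "A (snd p) / B (snd p) + fst p + E1f p / B (snd p) = \<nu> p / B (snd p)"
        if "B (snd p) \<noteq> 0" for p
        using that denid[of p] by (simp add: field_simps)
      have numq: "1 + E2f p / B (snd p) = dz \<nu> p / B (snd p)"
        if "B (snd p) \<noteq> 0" for p
        using that numid[of p] by (simp add: field_simps)
      have "\<forall>\<^sub>F p in F. A (snd p) / B (snd p) + fst p + E1f p / B (snd p) \<noteq> 0"
        using evall by (rule eventually_mono) (simp add: denq)
      then have "filterlim (\<lambda>p. A (snd p) / B (snd p) + fst p + E1f p / B (snd p)) (at 0) F"
        by (rule filterlim_atI[OF lden[simplified]])
      then have fl: "filterlim (\<lambda>p. -2 * (1 + E2f p / B (snd p)) / (A (snd p) / B (snd p) + fst p + E1f p / B (snd p))) at_infinity F"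
        by (rule filterlim_divide_at_infinity'[OF lnum]) simp
      have eq: "\<forall>\<^sub>F p in F. -2 * (1 + E2f p / B (snd p)) / (A (snd p) / B (snd p) + fst p + E1f p / B (snd p))
          = - 2 * dz \<nu> p / \<nu> p"
        using evall by (rule eventually_mono) (simp add: denq numq ratio_eq)
      have "filterlim (\<lambda>p. - 2 * dz \<nu> p / \<nu> p) at_infinity F"
        by (rule iffD1[OF filterlim_cong[OF refl refl eq] fl])
      then show ?thesis unfolding F_def SS_def by (rule disjI2)
    next
      case c
      have evAn: "\<forall>\<^sub>F p in F. A (snd p) \<noteq> 0" by (rule comp[OF c(1)])
      have lq: "((\<lambda>p. B (snd p) / A (snd p)) \<longlongrightarrow> L) F"
        using filterlim_compose[OF c(2) snda] .
      have evq: "\<forall>\<^sub>F p in F. norm (B (snd p) / A (snd p)) < norm L + 1"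
        using order_tendstoD(2)[OF tendsto_norm[OF lq], of "norm L + 1"] by simp
      have evall: "\<forall>\<^sub>F p in F. A (snd p) \<noteq> 0 \<and> norm (B (snd p) / A (snd p)) < norm L + 1 \<and>
          (fst p \<in> cball 0 \<rho> \<and> snd p \<in> cball 0 \<rho> \<and> \<nu> p \<noteq> 0) \<and>
          norm (E1f p) \<le> 2*M*(norm (A (snd p)) + norm (B (snd p))) * norm (fst p)^2
          \<and> norm (E2f p) \<le> 2*M*(norm (A (snd p)) + norm (B (snd p))) * norm (fst p)"
        using eventually_conj[OF evAn eventually_conj[OF evq eventually_conj[OF ev evE]]] by simp
      have le2_ev: "\<forall>\<^sub>F p in F. norm (E2f p / A (snd p)) \<le> norm (fst p) * (2*M*((norm L + 1)+1))"
        proof (rule eventually_mono[OF evall])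
          fix p assume h: "A (snd p) \<noteq> 0 \<and> norm (B (snd p) / A (snd p)) < norm L + 1 \<and>
          (fst p \<in> cball 0 \<rho> \<and> snd p \<in> cball 0 \<rho> \<and> \<nu> p \<noteq> 0) \<and>
          norm (E1f p) \<le> 2*M*(norm (A (snd p)) + norm (B (snd p))) * norm (fst p)^2
          \<and> norm (E2f p) \<le> 2*M*(norm (A (snd p)) + norm (B (snd p))) * norm (fst p)"
          have a: "norm (E2f p) \<le> 2*M*(norm (A (snd p)) + norm (B (snd p))) * norm (fst p)"
            using h by (simp add: norm_power)
          show "norm (E2f p / A (snd p)) \<le> norm (fst p) * (2*M*((norm L + 1)+1))"
            by (rule rel_bound'[OF a]) (use h nonneg in auto)
        qed
      have le2: "((\<lambda>p. E2f p / A (snd p)) \<longlongrightarrow> 0) F"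
        by (rule tendsto_0_le[OF fst0 le2_ev])
      have fst2: "((\<lambda>p. (fst p)^2) \<longlongrightarrow> 0) F" using tendsto_power[OF fst0, of 2] by simp
      have le1_ev: "\<forall>\<^sub>F p in F. norm (E1f p / A (snd p)) \<le> norm ((fst p)^2) * (2*M*((norm L + 1)+1))"
        proof (rule eventually_mono[OF evall])
          fix p assume h: "A (snd p) \<noteq> 0 \<and> norm (B (snd p) / A (snd p)) < norm L + 1 \<and>
          (fst p \<in> cball 0 \<rho> \<and> snd p \<in> cball 0 \<rho> \<and> \<nu> p \<noteq> 0) \<and>
          norm (E1f p) \<le> 2*M*(norm (A (snd p)) + norm (B (snd p))) * norm (fst p)^2
          \<and> norm (E2f p) \<le> 2*M*(norm (A (snd p)) + norm (B (snd p))) * norm (fst p)"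
          have a: "norm (E1f p) \<le> 2*M*(norm (A (snd p)) + norm (B (snd p))) * norm ((fst p)^2)"
            using h by (simp add: norm_power)
          show "norm (E1f p / A (snd p)) \<le> norm ((fst p)^2) * (2*M*((norm L + 1)+1))"
            by (rule rel_bound'[OF a]) (use h nonneg in auto)
        qed
      have le1: "((\<lambda>p. E1f p / A (snd p)) \<longlongrightarrow> 0) F"
        by (rule tendsto_0_le[OF fst2 le1_ev])
      have lim: "((\<lambda>p. -2 * (B (snd p) / A (snd p) + E2f p / A (snd p)) /
              (1 + B (snd p) / A (snd p) * fst p + E1f p / A (snd p))) \<longlongrightarrow>
              -2 * (L + 0) / (1 + L * 0 + 0)) F"
        by (intro tendsto_intros lq fst0 le1 le2) simp
      have denq: "1 + B (snd p) / A (snd p) * fst p + E1f p / A (snd p) = \<nu> p / A (snd p)"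
        if "A (snd p) \<noteq> 0" for p
        using that denid[of p] by (simp add: field_simps)
      have numq: "B (snd p) / A (snd p) + E2f p / A (snd p) = dz \<nu> p / A (snd p)"
        if "A (snd p) \<noteq> 0" for p
        using that numid[of p] by (simp add: field_simps)
      have eq: "\<forall>\<^sub>F p in F. -2 * (B (snd p) / A (snd p) + E2f p / A (snd p)) /
              (1 + B (snd p) / A (snd p) * fst p + E1f p / A (snd p)) = - 2 * dz \<nu> p / \<nu> p"
        using evall by (rule eventually_mono) (metis denq numq ratio_eq)
      have "((\<lambda>p. - 2 * dz \<nu> p / \<nu> p) \<longlongrightarrow> -2 * (L + 0) / (1 + L * 0 + 0)) F"
        by (rule iffD1[OF tendsto_cong[OF eq] lim])
      then show ?thesis unfolding F_def SS_def by (rule disjI1[OF exI])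
    qed
  qed
qed

end
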